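(* Let $1<p<q<\infty$. There exist functions $\phi,\psi\in L^p_{loc}(\mathbb{R})$ such that $S_p(\phi,\psi)<\infty$ and $T_p(\phi,\psi)<\infty$, but $S_q(\phi,\psi)=\infty$.
   Context: For $0<r<\infty$, with $\langle g\rangle_I=\frac1{|I|}\int_Ig$ and suprema over all intervals $I\subset\mathbb{R}$: $S_r(b_1,b_2)=\sup_I\big(\frac1{|I|}\int_I|b_1-\langle b_1\rangle_I|^r\big)^{1/r}\big(\frac1{|I|}\int_I|b_2-\langle b_2\rangle_I|^r\big)^{1/r}$ and $T_r(b_1,b_2)=\sup_I\big(\frac1{|I|}\int_I|b_1-\langle b_1\rangle_I|^r|b_2-\langle b_2\rangle_I|^r\big)^{1/r}$. *)

theory Defs
  imports "HOL-Analysis.Analysis"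
begin

definition avg :: "(real \<Rightarrow> real) \<Rightarrow> real \<Rightarrow> real \<Rightarrow> real" where
  "avg g a b = (LINT x:{a..b}|lborel. g x) / (b - a)"

definition ennreal_rpow :: "ennreal \<Rightarrow> real \<Rightarrow> ennreal" where
  "ennreal_rpow x s = (if x = top then top else ennreal (enn2real x powr s))"

definition locally_Lp :: "real \<Rightarrow> (real \<Rightarrow> real) \<Rightarrow> bool" where
  "locally_Lp p f \<longleftrightarrow> f \<in> borel_measurable lborel \<and>
     (\<forall>a b. (\<integral>\<^sup>+ x\<in>{a..b}. ennreal (\<bar>f x\<bar> powr p) \<partial>lborel) < top)"

definition osc :: "real \<Rightarrow> (real \<Rightarrow> real) \<Rightarrow> real \<Rightarrow> real \<Rightarrow> ennreal" where
  "osc r g a b = ennreal_rpow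
     ((\<integral>\<^sup>+ x\<in>{a..b}. ennreal (\<bar>g x - avg g a b\<bar> powr r) \<partial>lborel) / ennreal (b - a)) (1 / r)"

definition S_r :: "real \<Rightarrow> (real \<Rightarrow> real) \<Rightarrow> (real \<Rightarrow> real) \<Rightarrow> ennreal" where
  "S_r r b1 b2 = (SUP I\<in>{(a, b). a < (b::real)}. osc r b1 (fst I) (snd I) * osc r b2 (fst I) (snd I))"

definition T_r :: "real \<Rightarrow> (real \<Rightarrow> real) \<Rightarrow> (real \<Rightarrow> real) \<Rightarrow> ennreal" where
  "T_r r b1 b2 = (SUP I\<in>{(a, b). a < (b::real)}. ennreal_rpow
     ((\<integral>\<^sup>+ x\<in>{fst I..snd I}. ennreal (\<bar>b1 x - avg b1 (fst I) (snd I)\<bar> powr r *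
                                      \<bar>b2 x - avg b2 (fst I) (snd I)\<bar> powr r) \<partial>lborel)
        / ennreal (snd I - fst I)) (1 / r))"

end

theory Submission
  imports Defs
begin


lemma powr_subadd:
  fixes x y g :: real
  assumes "0 \<le> x" "0 \<le> y" "0 < g" "g \<le> 1"
  shows "(x + y) powr g \<le> x powr g + y powr g"
proof (cases "x = 0 \<or> y = 0")
  case True then show ?thesis by auto
next
  case False
  then have x: "x > 0" and y: "y > 0" using assms by auto
  have e: "(x+y) powr g = (x+y) * (x+y) powr (g-1)"
    using powr_add[of "x+y" 1 "g-1"] x y by simp
  have "(x + y) powr g = x * (x+y) powr (g-1) + y * (x+y) powr (g-1)"
    unfolding e by (simp add: distrib_right)
  also have "x * (x+y) powr (g-1) \<le> x * x powr (g-1)"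
    using x y assms by (intro mult_left_mono powr_mono2') auto
  also have "y * (x+y) powr (g-1) \<le> y * y powr (g-1)"
    using x y assms by (intro mult_left_mono powr_mono2') auto
  also have "x * x powr (g-1) + y * y powr (g-1) = x powr g + y powr g"
    using powr_add[of x 1 "g-1"] powr_add[of y 1 "g-1"] x y by simp
  finally show ?thesis by simp
qed

lemma powr_diff_le:
  fixes u v g :: real
  assumes "0 \<le> u" "u \<le> v" "0 < g" "g \<le> 1"
  shows "v powr g - u powr g \<le> (v - u) powr g"
  using powr_subadd[of u "v-u" g] assms by simp

lemma has_int_seg:
  fixes u v g :: real
  assumes "0 \<le> u" "u \<le> v" "0 < g"
  shows "((\<lambda>x. x powr (g-1)) has_integral (v powr g / g - u powr g / g)) {u..v}"
proof -
  have h1: "((\<lambda>x. x powr (g-1)) has_integral (u powr g / g)) {0..u}"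
    using has_integral_powr_from_0[of "g-1" u] assms by simp
  have h2: "((\<lambda>x. x powr (g-1)) has_integral (v powr g / g)) {0..v}"
    using has_integral_powr_from_0[of "g-1" v] assms by simp
  have "(\<lambda>x. x powr (g-1)) integrable_on {u..v}"
    using integrable_subinterval_real[OF has_integral_integrable[OF h2]] assms by auto
  then obtain j where j: "((\<lambda>x. x powr (g-1)) has_integral j) {u..v}" by blast
  have "((\<lambda>x. x powr (g-1)) has_integral (u powr g / g + j)) {0..v}"
    using has_integral_combine[OF _ _ h1 j] assms by auto
  then have "u powr g / g + j = v powr g / g" using h2 has_integral_unique by blast
  then have "j = v powr g / g - u powr g / g" by (simp add: algebra_simps)
  then show ?thesis using j by simp
qed



lemma KL:
  fixes g a b :: real
  assumes "0 < g" "g \<le> 1" "a < b"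
  shows "(\<integral>\<^sup>+x\<in>{a..b}. ennreal (if 0 \<le> x \<and> x \<le> 1 then x powr (g-1) else 0) \<partial>lborel)
         \<le> ennreal (min (b-a) 1 powr g / g)"
proof -
  define u where "u = min (max a 0) 1"
  define v where "v = min (max b 0) 1"
  have uv: "0 \<le> u" "u \<le> v" "v - u \<le> min (b-a) 1" using assms unfolding u_def v_def by auto
  have "(\<integral>\<^sup>+x\<in>{a..b}. ennreal (if 0 \<le> x \<and> x \<le> 1 then x powr (g-1) else 0) \<partial>lborel)
      \<le> (\<integral>\<^sup>+x. ennreal (x powr (g-1)) * indicator {u..v} x \<partial>lborel)"
    by (intro nn_integral_mono) (auto simp: indicator_def u_def v_def)
  also have "\<dots> = ennreal (v powr g / g - u powr g / g)"
    by (rule nn_integral_has_integral_lebesgue'[OF _ has_int_seg[OF uv(1,2) assms(1)]]) simp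
  also have "\<dots> \<le> ennreal (min (b-a) 1 powr g / g)"
  proof (rule ennreal_leI)
    have "v powr g - u powr g \<le> (v - u) powr g" using powr_diff_le uv assms by simp
    also have "\<dots> \<le> min (b-a) 1 powr g" using uv assms by (intro powr_mono2) auto
    finally show "v powr g / g - u powr g / g \<le> min (b-a) 1 powr g / g"
      using assms by (simp add: diff_divide_distrib[symmetric] divide_right_mono)
  qed
  finally show ?thesis .
qed

lemma top_by_nat:
  fixes X :: ennreal and c :: real
  assumes "c > 0" "\<And>n::nat. ennreal (c * real n) \<le> X"
  shows "X = top"
proof (rule ccontr)
  assume "X \<noteq> top"
  obtain n :: nat where n: "enn2real X / c < real n" using reals_Archimedean2 by blast
  have "ennreal (c * real n) \<le> ennreal (enn2real X)" using assms(2)[of n] \<open>X \<noteq> top\<close> by (simp add: ennreal_enn2real_if)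
  then have "c * real n \<le> enn2real X" by (simp add: enn2real_nonneg)
  with n assms(1) show False by (simp add: field_simps)
qed

definition phi :: "real \<Rightarrow> real \<Rightarrow> real" where
  "phi al x = (if 0 \<le> x \<and> x \<le> 1 then x powr (-al) else 0)"

definition psi :: "real \<Rightarrow> real" where
  "psi x = max 0 (min x 1)"

lemma phi_nonneg: "phi al x \<ge> 0" by (simp add: phi_def)

lemma phi_meas[measurable]: "phi al \<in> borel_measurable borel"
  unfolding phi_def by measurable

lemma psi_cont: "continuous_on S psi"
  unfolding psi_def by (intro continuous_intros)

lemma avg_phi_bound:
  fixes al a b :: real
  assumes "0 < al" "al < 1" "a < b"
  shows "0 \<le> avg (phi al) a b" "avg (phi al) a b * min (b-a) 1 \<le> 1 / (1 - al)"
proof -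
  define m where "m = min (b-a) 1"
  have m: "0 < m" "m \<le> 1" "m \<le> b - a" using assms by (auto simp: m_def)
  define L where "L = (LINT x:{a..b}|lborel. phi al x)"
  have L0: "0 \<le> L" unfolding L_def set_lebesgue_integral_def
    by (intro Bochner_Integration.integral_nonneg) (auto simp: phi_nonneg)
  have LB: "L \<le> m powr (1 - al) / (1 - al)"
  proof (cases "integrable lborel (\<lambda>x. indicator {a..b} x *\<^sub>R phi al x)")
    case True
    have "ennreal L = (\<integral>\<^sup>+x. ennreal (indicator {a..b} x *\<^sub>R phi al x) \<partial>lborel)"
      unfolding L_def set_lebesgue_integral_def
      by (rule nn_integral_eq_integral[symmetric, OF True]) (auto simp: phi_nonneg)
    also have "\<dots> = (\<integral>\<^sup>+x\<in>{a..b}. ennreal (if 0 \<le> x \<and> x \<le> 1 then x powr ((1-al)-1) else 0) \<partial>lborel)"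
      by (intro nn_integral_cong) (auto simp: phi_def indicator_def)
    also have "\<dots> \<le> ennreal (m powr (1-al) / (1-al))"
      unfolding m_def by (rule KL) (use assms in auto)
    finally show ?thesis using m assms by (subst (asm) ennreal_le_iff) auto
  next
    case False
    then have "L = 0" unfolding L_def set_lebesgue_integral_def by (rule not_integrable_integral_eq)
    then show ?thesis using m assms by simp
  qed
  show "0 \<le> avg (phi al) a b" using L0 assms unfolding avg_def L_def[symmetric] by simp
  have "m powr (1 - al) \<le> 1" using powr_mono2[of "1-al" m 1] m assms by simp
  then have c: "m powr (1 - al) / (1 - al) \<le> 1 / (1 - al)"
    using assms by (intro divide_right_mono) auto
  have "L * m \<le> (m powr (1 - al) / (1 - al)) * m"
    using LB m by (intro mult_right_mono) auto
  also have "\<dots> \<le> (1 / (1 - al)) * m"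
    using c m by (intro mult_right_mono) auto
  also have "\<dots> \<le> (1 / (1 - al)) * (b - a)"
    using m assms by (intro mult_left_mono) auto
  finally have "L * m \<le> (1 / (1 - al)) * (b - a)" .
  then show "avg (phi al) a b * min (b-a) 1 \<le> 1 / (1 - al)"
    unfolding avg_def L_def[symmetric] m_def[symmetric] using assms
    by (simp add: field_simps)
qed




lemma abs_diff_powr:
  fixes u v p :: real
  assumes "0 \<le> u" "0 \<le> v" "0 < p"
  shows "\<bar>u - v\<bar> powr p \<le> u powr p + v powr p"
proof -
  have "\<bar>u - v\<bar> powr p \<le> (max u v) powr p"
    using assms by (intro powr_mono2) auto
  also have "\<dots> \<le> u powr p + v powr p" by (simp add: max_def)
  finally show ?thesis .
qed

lemma phi_powr:
  fixes al p x :: real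
  shows "phi al x powr p = (if 0 \<le> x \<and> x \<le> 1 then x powr ((1 - al * p) - 1) else 0)"
  by (simp add: phi_def powr_powr)

lemma X_bound:
  fixes al p a b :: real
  assumes "0 < al" "al * p < 1" "1 < p" "a < b"
  shows "(\<integral>\<^sup>+x\<in>{a..b}. ennreal (\<bar>phi al x - avg (phi al) a b\<bar> powr p) \<partial>lborel)
     \<le> ennreal ((b - a) * (1 / (1 - al * p) + (1 / (1 - al)) powr p) / min (b-a) 1 powr p)"
proof -
  define m where "m = min (b-a) 1"
  define A where "A = avg (phi al) a b"
  define h where "h = b - a"
  have m: "0 < m" "m \<le> 1" "m \<le> h" using assms by (auto simp: m_def h_def)
  have h: "0 < h" using assms by (simp add: h_def)
  have al1: "al < 1" using assms
    by (metis less_trans mult.right_neutral mult_strict_left_mono)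
  have A0: "0 \<le> A" and Am: "A * m \<le> 1 / (1 - al)"
    using avg_phi_bound[OF assms(1) al1 assms(4)] by (auto simp: A_def m_def)
  have b2: "(\<integral>\<^sup>+x. ennreal (A powr p) * indicator {a..b} x \<partial>lborel) = ennreal (A powr p * h)"
    using assms by (simp add: nn_integral_cmult_indicator h_def ennreal_mult)
  have b1: "(\<integral>\<^sup>+x\<in>{a..b}. ennreal (phi al x powr p) \<partial>lborel) \<le> ennreal (m powr (1 - al * p) / (1 - al * p))"
    unfolding phi_powr m_def by (rule KL) (use assms in auto)
  have "(\<integral>\<^sup>+x\<in>{a..b}. ennreal (\<bar>phi al x - A\<bar> powr p) \<partial>lborel)
     \<le> (\<integral>\<^sup>+x. ennreal (phi al x powr p) * indicator {a..b} x + ennreal (A powr p) * indicator {a..b} x \<partial>lborel)"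
  proof (intro nn_integral_mono)
    fix x
    have "\<bar>phi al x - A\<bar> powr p \<le> phi al x powr p + A powr p"
      using abs_diff_powr[of "phi al x" A p] phi_nonneg A0 assms by auto
    then show "ennreal (\<bar>phi al x - A\<bar> powr p) * indicator {a..b} x
      \<le> ennreal (phi al x powr p) * indicator {a..b} x + ennreal (A powr p) * indicator {a..b} x"
      by (auto simp: indicator_def ennreal_plus[symmetric] simp del: ennreal_plus)
  qed
  also have "\<dots> = (\<integral>\<^sup>+x\<in>{a..b}. ennreal (phi al x powr p) \<partial>lborel) + (\<integral>\<^sup>+x. ennreal (A powr p) * indicator {a..b} x \<partial>lborel)"
    by (rule nn_integral_add) auto
  also have "\<dots> \<le> ennreal (m powr (1 - al * p) / (1 - al * p)) + ennreal (A powr p * h)"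
    using b1 b2 by (intro add_mono) auto
  also have "\<dots> = ennreal (m powr (1 - al * p) / (1 - al * p) + A powr p * h)"
    using assms h by (intro ennreal_plus[symmetric]) auto
  also have "\<dots> \<le> ennreal (h * (1 / (1 - al * p) + (1 / (1 - al)) powr p) / m powr p)"
  proof (rule ennreal_leI)
    have mp: "0 < m powr p" using m by simp
    have i1: "m powr (1 - al * p) * m powr p \<le> h"
    proof -
      have "m powr (1 - al * p) * m powr p = m powr (1 - al * p + p)" by (simp add: powr_add)
      also have "\<dots> \<le> m powr 1" using m assms al1 by (intro powr_mono') auto
      finally show ?thesis using m by simp
    qed
    have i2: "A powr p * m powr p \<le> (1 / (1 - al)) powr p"
    proof -
      have "A powr p * m powr p = (A * m) powr p" using A0 m by (simp add: powr_mult)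
      also have "\<dots> \<le> (1 / (1 - al)) powr p" using Am A0 m assms by (intro powr_mono2) auto
      finally show ?thesis .
    qed
    have "(m powr (1 - al * p) / (1 - al * p) + A powr p * h) * m powr p
        = (m powr (1 - al * p) * m powr p) / (1 - al * p) + h * (A powr p * m powr p)"
      by (simp add: algebra_simps)
    also have "\<dots> \<le> h / (1 - al * p) + h * (1 / (1 - al)) powr p"
      using i1 i2 h assms by (intro add_mono divide_right_mono mult_left_mono) auto
    also have "\<dots> = h * (1 / (1 - al * p) + (1 / (1 - al)) powr p)" by (simp add: algebra_simps)
    finally show "m powr (1 - al * p) / (1 - al * p) + A powr p * h
        \<le> h * (1 / (1 - al * p) + (1 / (1 - al)) powr p) / m powr p"
      using mp by (simp add: le_divide_eq)
  qed
  finally show ?thesis unfolding A_def h_def m_def .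
qed

lemma psi_dev:
  fixes a b x :: real
  assumes "a < b" "x \<in> {a..b}"
  shows "\<bar>psi x - avg psi a b\<bar> \<le> min (b-a) 1"
proof -
  define m where "m = min (b-a) 1"
  have lip: "\<bar>psi x - psi y\<bar> \<le> m" if "y \<in> {a..b}" for y
    using assms that unfolding psi_def m_def by (auto simp: abs_le_iff split: split_min split_max)
  have si: "set_integrable lborel {a..b} f" if "continuous_on {a..b} f" for f :: "real \<Rightarrow> real"
    unfolding set_integrable_def by (rule borel_integrable_compact) (use that in auto)
  have c1: "set_integrable lborel {a..b} (\<lambda>y. c)" for c :: real by (rule si) (intro continuous_intros)
  have c2: "set_integrable lborel {a..b} psi" by (rule si) (rule psi_cont)
  have lo: "(LINT y:{a..b}|lborel. psi x - m) \<le> (LINT y:{a..b}|lborel. psi y)"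
    by (rule set_integral_mono[OF c1 c2]) (use lip in force)
  have hi: "(LINT y:{a..b}|lborel. psi y) \<le> (LINT y:{a..b}|lborel. psi x + m)"
    by (rule set_integral_mono[OF c2 c1]) (use lip in force)
  have k: "(LINT y:{a..b}|lborel. c) = (b - a) * c" for c :: real
    using assms by (subst set_integral_const) auto
  have "(b - a) * (psi x - m) \<le> (LINT y:{a..b}|lborel. psi y)"
       "(LINT y:{a..b}|lborel. psi y) \<le> (b - a) * (psi x + m)"
    using lo hi k by auto
  then have "psi x - m \<le> avg psi a b" "avg psi a b \<le> psi x + m"
    using assms unfolding avg_def by (auto simp: field_simps)
  then show ?thesis unfolding m_def by auto
qed

lemma rpow_le:
  fixes Z :: ennreal and c s :: real
  assumes "Z \<le> ennreal c" "0 \<le> c" "0 < s"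
  shows "ennreal_rpow Z s \<le> ennreal (c powr s)"
proof -
  have "Z \<noteq> top" using assms(1) by (metis ennreal_neq_top neq_top_trans)
  then have Z: "Z = ennreal (enn2real Z)" by (simp add: ennreal_enn2real_if)
  have "enn2real Z \<le> c" using enn2real_mono[OF assms(1)] assms(2) by simp
  then show ?thesis unfolding ennreal_rpow_def using \<open>Z \<noteq> top\<close> assms
    by (auto intro!: ennreal_leI powr_mono2 simp: enn2real_nonneg)
qed

lemma div_le:
  fixes Z :: ennreal and c h :: real
  assumes "Z \<le> ennreal (c * h)" "0 < h" "0 \<le> c"
  shows "Z / ennreal h \<le> ennreal c"
proof -
  have "Z / ennreal h \<le> ennreal (c * h) / ennreal h" by (rule divide_right_mono_ennreal[OF assms(1)])
  also have "\<dots> = ennreal c" using assms by (simp add: divide_ennreal)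
  finally show ?thesis .
qed


lemma phi_q_top:
  fixes q c :: real
  assumes q: "1 < q"
  shows "(\<integral>\<^sup>+x\<in>{0..1}. ennreal (\<bar>phi (1/q) x - c\<bar> powr q) \<partial>lborel) = top"
proof -
  define t0 where "t0 = 2 * \<bar>c\<bar> + 1"
  define d where "d = min 1 (t0 powr (-q))"
  define C where "C = 2 powr q"
  have t0: "0 < t0" by (simp add: t0_def)
  have d: "0 < d" "d \<le> 1" using t0 by (auto simp: d_def)
  have C: "0 < C" by (simp add: C_def)
  have big: "x powr (-(1/q)) \<ge> t0" if "0 < x" "x \<le> d" for x
  proof -
    have "d powr (-(1/q)) \<le> x powr (-(1/q))" using that q by (intro powr_mono2') auto
    moreover have "(t0 powr (-q)) powr (-(1/q)) \<le> d powr (-(1/q))"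
      using d t0 q by (intro powr_mono2') (auto simp: d_def)
    moreover have "(t0 powr (-q)) powr (-(1/q)) = t0" using q t0 by (simp add: powr_powr)
    ultimately show ?thesis by linarith
  qed
  have pw: "\<bar>phi (1/q) x - c\<bar> powr q \<ge> (1/x) / C" if "0 < x" "x \<le> d" for x
  proof -
    define t where "t = x powr (-(1/q))"
    have tt: "t \<ge> t0" using big[OF that] by (simp add: t_def)
    have ph: "phi (1/q) x = t" using that d by (simp add: phi_def t_def)
    have "\<bar>t - c\<bar> \<ge> t / 2" using tt unfolding t0_def by auto
    then have "(t / 2) powr q \<le> \<bar>t - c\<bar> powr q" using tt t0 q by (intro powr_mono2) auto
    moreover have "(t / 2) powr q = (1/x) / C"
    proof -
      have "(t / 2) powr q = t powr q / C" by (simp add: powr_divide C_def)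
      also have "t powr q = x powr (-1)" using q by (simp add: t_def powr_powr)
      also have "x powr (-1) = 1 / x" using that by (simp add: powr_minus_divide)
      finally show ?thesis .
    qed
    ultimately show ?thesis using ph by simp
  qed
  show ?thesis
  proof (rule top_by_nat[of "1 / C"])
    show "0 < 1 / C" using C by simp
    fix n :: nat
    define e where "e = d * exp (- real n)"
    have e: "0 < e" "e \<le> d" using d by (auto simp: e_def mult_le_cancel_left1)
    have lne: "ln e = ln d - real n" using d by (simp add: e_def ln_mult)
    have hi: "((\<lambda>x. (1/x) / C) has_integral ((\<lambda>x. ln x / C) d - (\<lambda>x. ln x / C) e)) {e..d}"
    proof (rule fundamental_theorem_of_calculus)
      show "e \<le> d" using e by simp
      fix x assume "x \<in> {e..d}"
      then have "0 < x" using e by auto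
      then show "((\<lambda>x. ln x / C) has_vector_derivative (1/x) / C) (at x within {e..d})"
        unfolding has_real_derivative_iff_has_vector_derivative[symmetric]
        using C by (auto intro!: derivative_eq_intros)
    qed
    have "(\<integral>\<^sup>+x. ennreal ((1/x) / C) * indicator {e..d} x \<partial>lborel) = ennreal (ln d / C - ln e / C)"
      using nn_integral_has_integral_lebesgue'[OF _ hi] e C by simp
    also have "ln d / C - ln e / C = 1 / C * real n" using lne C by (simp add: field_simps)
    finally have eq: "(\<integral>\<^sup>+x. ennreal ((1/x) / C) * indicator {e..d} x \<partial>lborel) = ennreal (1 / C * real n)" .
    have "(\<integral>\<^sup>+x. ennreal ((1/x) / C) * indicator {e..d} x \<partial>lborel)
        \<le> (\<integral>\<^sup>+x\<in>{0..1}. ennreal (\<bar>phi (1/q) x - c\<bar> powr q) \<partial>lborel)"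
    proof (rule nn_integral_mono)
      fix x
      show "ennreal ((1/x) / C) * indicator {e..d} x \<le> ennreal (\<bar>phi (1/q) x - c\<bar> powr q) * indicator {0..1} x"
      proof (cases "x \<in> {e..d}")
        case True
        then have "0 < x" "x \<le> d" "x \<in> {0..1}" using e d by auto
        then show ?thesis using pw[of x] True by (simp add: indicator_def)
      qed simp
    qed
    then show "ennreal (1 / C * real n) \<le> (\<integral>\<^sup>+x\<in>{0..1}. ennreal (\<bar>phi (1/q) x - c\<bar> powr q) \<partial>lborel)"
      using eq by simp
  qed
qed

lemma ennreal_div_one: "(X::ennreal) / 1 = X"
  by (simp add: divide_ennreal_def)

lemma psi_osc_pos:
  fixes q :: real
  assumes q: "1 < q"
  shows "osc q psi 0 1 \<noteq> 0"
proof -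
  define c where "c = avg psi 0 1"
  define Y where "Y = (\<integral>\<^sup>+x\<in>{0..1}. ennreal (\<bar>psi x - c\<bar> powr q) \<partial>lborel)"
  define B where "B = (1/4) powr q"
  have B: "0 < B" by (simp add: B_def)
  obtain l where l: "0 \<le> l" "l + 1/4 \<le> 1" "\<And>x. x \<in> {l..l+1/4} \<Longrightarrow> \<bar>x - c\<bar> \<ge> 1/4"
  proof (cases "c \<le> 1/2")
    case True
    show ?thesis by (rule that[of "3/4"]) (use True in auto)
  next
    case False
    show ?thesis by (rule that[of 0]) (use False in auto)
  qed
  have "(\<integral>\<^sup>+x. ennreal B * indicator {l..l+1/4} x \<partial>lborel) \<le> Y"
    unfolding Y_def
  proof (rule nn_integral_mono)
    fix x
    show "ennreal B * indicator {l..l+1/4} x \<le> ennreal (\<bar>psi x - c\<bar> powr q) * indicator {0..1} x"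
    proof (cases "x \<in> {l..l+1/4}")
      case True
      then have x01: "x \<in> {0..1}" using l by auto
      then have "psi x = x" by (simp add: psi_def)
      then have "B \<le> \<bar>psi x - c\<bar> powr q" unfolding B_def using l(3)[OF True] q
        by (intro powr_mono2) auto
      then show ?thesis using True x01 by (simp add: indicator_def)
    qed simp
  qed
  moreover have "(\<integral>\<^sup>+x. ennreal B * indicator {l..l+1/4} x \<partial>lborel) = ennreal B * ennreal (1/4)"
    by (subst nn_integral_cmult_indicator) auto
  ultimately have Yl: "ennreal B * ennreal (1/4) \<le> Y" by simp
  have "0 < ennreal B * ennreal (1/4)" using B
    by (metis ennreal_zero_less_mult_iff ennreal_less_zero_iff zero_less_divide_1_iff zero_less_numeral)
  then have Ypos: "0 < Y" using Yl by (rule less_le_trans)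
  show ?thesis
  proof (cases "Y = top")
    case True
    then show ?thesis by (simp add: osc_def ennreal_rpow_def Y_def c_def ennreal_top_divide ennreal_div_one)
  next
    case False
    then have "0 < enn2real Y" using Ypos by (simp add: enn2real_positive_iff top.not_eq_extremum)
    then show ?thesis using False by (simp add: osc_def ennreal_rpow_def Y_def[symmetric] c_def[symmetric] ennreal_div_one)
  qed
qed


lemma S_int:
  fixes al p a b :: real
  assumes "0 < al" "al * p < 1" "1 < p" "a < b"
  shows "osc p (phi al) a b * osc p psi a b \<le> ennreal ((1 / (1 - al * p) + (1 / (1 - al)) powr p) powr (1/p))"
proof -
  define K where "K = 1 / (1 - al * p) + (1 / (1 - al)) powr p"
  define m where "m = min (b-a) 1"
  define h where "h = b - a"
  have m: "0 < m" "m \<le> 1" "m \<le> h" using assms by (auto simp: m_def h_def)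
  have h: "0 < h" using assms by (simp add: h_def)
  have K: "0 \<le> K" using assms by (simp add: K_def)
  have X: "(\<integral>\<^sup>+x\<in>{a..b}. ennreal (\<bar>phi al x - avg (phi al) a b\<bar> powr p) \<partial>lborel) \<le> ennreal (K / m powr p * h)"
    using X_bound[OF assms] by (simp add: K_def m_def h_def mult.commute)
  have o1: "osc p (phi al) a b \<le> ennreal ((K / m powr p) powr (1/p))"
    unfolding osc_def using assms K m h
    by (intro rpow_le div_le[OF X[unfolded h_def]]) auto
  have Y: "(\<integral>\<^sup>+x\<in>{a..b}. ennreal (\<bar>psi x - avg psi a b\<bar> powr p) \<partial>lborel) \<le> ennreal (m powr p * h)"
  proof -
    have "(\<integral>\<^sup>+x\<in>{a..b}. ennreal (\<bar>psi x - avg psi a b\<bar> powr p) \<partial>lborel)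
        \<le> (\<integral>\<^sup>+x. ennreal (m powr p) * indicator {a..b} x \<partial>lborel)"
    proof (rule nn_integral_mono)
      fix x
      show "ennreal (\<bar>psi x - avg psi a b\<bar> powr p) * indicator {a..b} x \<le> ennreal (m powr p) * indicator {a..b} x"
      proof (cases "x \<in> {a..b}")
        case True
        then have "\<bar>psi x - avg psi a b\<bar> powr p \<le> m powr p"
          using psi_dev[OF assms(4) True] assms unfolding m_def by (intro powr_mono2) auto
        then show ?thesis using True by (simp add: indicator_def)
      qed simp
    qed
    also have "\<dots> = ennreal (m powr p * h)"
      using assms m by (simp add: nn_integral_cmult_indicator h_def ennreal_mult)
    finally show ?thesis .
  qed
  have o2: "osc p psi a b \<le> ennreal ((m powr p) powr (1/p))"
    unfolding osc_def using assms K m h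
    by (intro rpow_le div_le[OF Y[unfolded h_def]]) auto
  have "osc p (phi al) a b * osc p psi a b \<le> ennreal ((K / m powr p) powr (1/p)) * ennreal ((m powr p) powr (1/p))"
    using o1 o2 by (intro mult_mono) auto
  also have "\<dots> = ennreal ((K / m powr p) powr (1/p) * (m powr p) powr (1/p))"
    by (rule ennreal_mult[symmetric]) auto
  also have "(K / m powr p) powr (1/p) * (m powr p) powr (1/p) = K powr (1/p)"
    using m assms by (simp add: powr_divide powr_powr)
  finally show ?thesis unfolding K_def .
qed

lemma T_int:
  fixes al p a b :: real
  assumes "0 < al" "al * p < 1" "1 < p" "a < b"
  shows "ennreal_rpow ((\<integral>\<^sup>+ x\<in>{a..b}. ennreal (\<bar>phi al x - avg (phi al) a b\<bar> powr p *
                                      \<bar>psi x - avg psi a b\<bar> powr p) \<partial>lborel) / ennreal (b - a)) (1 / p)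
    \<le> ennreal ((1 / (1 - al * p) + (1 / (1 - al)) powr p) powr (1/p))"
proof -
  define K where "K = 1 / (1 - al * p) + (1 / (1 - al)) powr p"
  define m where "m = min (b-a) 1"
  define h where "h = b - a"
  have m: "0 < m" "m \<le> 1" "m \<le> h" using assms by (auto simp: m_def h_def)
  have h: "0 < h" using assms by (simp add: h_def)
  have K: "0 \<le> K" using assms by (simp add: K_def)
  have X: "(\<integral>\<^sup>+x\<in>{a..b}. ennreal (\<bar>phi al x - avg (phi al) a b\<bar> powr p) \<partial>lborel) \<le> ennreal (h * K / m powr p)"
    using X_bound[OF assms] by (simp add: K_def m_def h_def)
  have "(\<integral>\<^sup>+ x\<in>{a..b}. ennreal (\<bar>phi al x - avg (phi al) a b\<bar> powr p * \<bar>psi x - avg psi a b\<bar> powr p) \<partial>lborel)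
     \<le> (\<integral>\<^sup>+ x. ennreal (\<bar>phi al x - avg (phi al) a b\<bar> powr p) * indicator {a..b} x * ennreal (m powr p) \<partial>lborel)"
  proof (rule nn_integral_mono)
    fix x
    show "ennreal (\<bar>phi al x - avg (phi al) a b\<bar> powr p * \<bar>psi x - avg psi a b\<bar> powr p) * indicator {a..b} x
      \<le> ennreal (\<bar>phi al x - avg (phi al) a b\<bar> powr p) * indicator {a..b} x * ennreal (m powr p)"
    proof (cases "x \<in> {a..b}")
      case True
      then have "\<bar>psi x - avg psi a b\<bar> powr p \<le> m powr p"
        using psi_dev[OF assms(4) True] assms unfolding m_def by (intro powr_mono2) auto
      then have "\<bar>phi al x - avg (phi al) a b\<bar> powr p * \<bar>psi x - avg psi a b\<bar> powr p
          \<le> \<bar>phi al x - avg (phi al) a b\<bar> powr p * m powr p"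
        by (intro mult_left_mono) auto
      then show ?thesis using True by (simp add: indicator_def ennreal_mult[symmetric] del: ennreal_mult)
    qed simp
  qed
  also have "\<dots> = (\<integral>\<^sup>+x\<in>{a..b}. ennreal (\<bar>phi al x - avg (phi al) a b\<bar> powr p) \<partial>lborel) * ennreal (m powr p)"
    by (rule nn_integral_multc) auto
  also have "\<dots> \<le> ennreal (h * K / m powr p) * ennreal (m powr p)"
    using X by (rule mult_right_mono) auto
  also have "\<dots> = ennreal (K * h)"
    using m h K by (simp add: ennreal_mult[symmetric] del: ennreal_mult)
  finally have Z: "(\<integral>\<^sup>+ x\<in>{a..b}. ennreal (\<bar>phi al x - avg (phi al) a b\<bar> powr p * \<bar>psi x - avg psi a b\<bar> powr p) \<partial>lborel)
     \<le> ennreal (K * (b - a))" unfolding h_def .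
  show ?thesis unfolding K_def[symmetric] using assms K
    by (intro rpow_le div_le[OF Z]) auto
qed

lemma phi_Lp:
  fixes al p :: real
  assumes "0 < al" "al * p < 1" "1 < p"
  shows "locally_Lp p (phi al)"
  unfolding locally_Lp_def
proof (intro conjI allI)
  show "phi al \<in> borel_measurable lborel" by measurable
  fix a b :: real
  have "(\<integral>\<^sup>+x\<in>{a..b}. ennreal (\<bar>phi al x\<bar> powr p) \<partial>lborel)
      \<le> (\<integral>\<^sup>+x\<in>{a-1..max a b}. ennreal (if 0 \<le> x \<and> x \<le> 1 then x powr ((1 - al * p) - 1) else 0) \<partial>lborel)"
    by (intro nn_integral_mono) (auto simp: indicator_def phi_nonneg phi_powr[symmetric])
  also have "\<dots> \<le> ennreal (min (max a b - (a - 1)) 1 powr (1 - al * p) / (1 - al * p))"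
    by (rule KL) (use assms in auto)
  also have "\<dots> < top" by simp
  finally show "(\<integral>\<^sup>+x\<in>{a..b}. ennreal (\<bar>phi al x\<bar> powr p) \<partial>lborel) < top" .
qed

lemma psi_Lp:
  fixes p :: real
  assumes "0 < p"
  shows "locally_Lp p psi"
  unfolding locally_Lp_def
proof (intro conjI allI)
  show "psi \<in> borel_measurable lborel" unfolding psi_def by measurable
  fix a b :: real
  have "(\<integral>\<^sup>+x\<in>{a..b}. ennreal (\<bar>psi x\<bar> powr p) \<partial>lborel) \<le> (\<integral>\<^sup>+x. 1 * indicator {a..b} x \<partial>lborel)"
  proof (rule nn_integral_mono)
    fix x
    have "\<bar>psi x\<bar> powr p \<le> 1 powr p" using assms by (intro powr_mono2) (auto simp: psi_def)
    then show "ennreal (\<bar>psi x\<bar> powr p) * indicator {a..b} x \<le> 1 * indicator {a..b} x"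
      by (auto simp: indicator_def)
  qed
  also have "\<dots> < top" by (subst nn_integral_cmult_indicator) (auto simp: emeasure_lborel_Icc_eq)
  finally show "(\<integral>\<^sup>+x\<in>{a..b}. ennreal (\<bar>psi x\<bar> powr p) \<partial>lborel) < top" .
qed

theorem proposition4p1:
  fixes p q :: real
  assumes "1 < p" and "p < q"
  shows "\<exists>\<phi> \<psi> :: real \<Rightarrow> real. locally_Lp p \<phi> \<and> locally_Lp p \<psi> \<and>
           S_r p \<phi> \<psi> < top \<and> T_r p \<phi> \<psi> < top \<and> S_r q \<phi> \<psi> = top"
proof (intro exI conjI)
  define al where "al = 1 / q"
  have q: "1 < q" using assms by simp
  have al: "0 < al" "al * p < 1" using assms q by (auto simp: al_def)
  define K where "K = (1 / (1 - al * p) + (1 / (1 - al)) powr p) powr (1/p)"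
  show "locally_Lp p (phi al)" by (rule phi_Lp[OF al assms(1)])
  show "locally_Lp p psi" using assms by (intro psi_Lp) auto
  have "S_r p (phi al) psi \<le> ennreal K"
    unfolding S_r_def K_def
  proof (rule SUP_least)
    fix I :: "real \<times> real" assume "I \<in> {(a, b). a < b}"
    then obtain a b where I: "I = (a, b)" "a < b" by auto
    show "osc p (phi al) (fst I) (snd I) * osc p psi (fst I) (snd I)
        \<le> ennreal ((1 / (1 - al * p) + (1 / (1 - al)) powr p) powr (1 / p))"
      using S_int[OF al assms(1) I(2)] I(1) by simp
  qed
  then show "S_r p (phi al) psi < top" using le_less_trans by fastforce
  have "T_r p (phi al) psi \<le> ennreal K"
    unfolding T_r_def K_def
  proof (rule SUP_least)
    fix I :: "real \<times> real" assume "I \<in> {(a, b). a < b}"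
    then obtain a b where I: "I = (a, b)" "a < b" by auto
    show "ennreal_rpow ((\<integral>\<^sup>+ x\<in>{fst I..snd I}. ennreal (\<bar>phi al x - avg (phi al) (fst I) (snd I)\<bar> powr p *
                                      \<bar>psi x - avg psi (fst I) (snd I)\<bar> powr p) \<partial>lborel)
        / ennreal (snd I - fst I)) (1 / p)
        \<le> ennreal ((1 / (1 - al * p) + (1 / (1 - al)) powr p) powr (1 / p))"
      using T_int[OF al assms(1) I(2)] I(1) by simp
  qed
  then show "T_r p (phi al) psi < top" using le_less_trans by fastforce
  have o1: "osc q (phi al) 0 1 = top"
    using phi_q_top[OF q, of "avg (phi (1/q)) 0 1"]
    by (simp add: osc_def ennreal_rpow_def al_def ennreal_top_divide ennreal_div_one)
  have o2: "osc q psi 0 1 \<noteq> 0" by (rule psi_osc_pos[OF q])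
  have "osc q (phi al) (fst (0::real, 1::real)) (snd (0::real, 1::real)) * osc q psi (fst (0::real, 1::real)) (snd (0::real, 1::real))
      \<le> S_r q (phi al) psi"
    unfolding S_r_def by (rule SUP_upper) auto
  then show "S_r q (phi al) psi = top" using o1 o2 by (simp add: top_unique)
qed

end
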